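(* Let $h,k\ge0$ be integers. For every digraph $G$ there is a partition of $V(G)$ into three sets $P,Q,R$ (possibly empty) such that $G[P]$ is $(h,k)$-out-orderable, $G[Q]$ is $(h,k)$-in-orderable, and $G[R]$ is $(h,k)$-robust.
   Context: Digraphs are finite, with no loops, parallel edges or antiparallel pairs; $\chi(X)$ denotes the chromatic number of the underlying undirected graph of $G[X]$. A digraph $G$ is $(h,k)$-out-orderable if there is a partition $X_1,\dots,X_n$ of $V(G)$ such that for each $i$, $\chi(X_i)\le h$ and each vertex of $X_i$ has at most $k-1$ out-neighbours in $X_{i+1}\cup\dots\cup X_n$; $(h,k)$-in-orderable is defined identically with in-neighbours in place of out-neighbours. A digraph $G$ is $(h,k)$-robust if for every nonempty $Z\subseteq V(G)$ with $\chi(Z)\le h$, some vertex of $Z$ has at least $k$ out-neighbours in $V(G)\setminus Z$ and at least $k$ in-neighbours in $V(G)\setminus Z$. *)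

theory Defs
  imports Main
begin

definition digraph :: "'a set \<Rightarrow> ('a \<times> 'a) set \<Rightarrow> bool" where
  "digraph V E \<longleftrightarrow> finite V \<and> E \<subseteq> V \<times> V \<and> (\<forall>v. (v, v) \<notin> E)
     \<and> (\<forall>u v. (u, v) \<in> E \<longrightarrow> (v, u) \<notin> E)"

definition induced :: "('a \<times> 'a) set \<Rightarrow> 'a set \<Rightarrow> ('a \<times> 'a) set" where
  "induced E X = E \<inter> (X \<times> X)"

definition colourable :: "('a \<times> 'a) set \<Rightarrow> 'a set \<Rightarrow> nat \<Rightarrow> bool" where
  "colourable E X h \<longleftrightarrow> (\<exists>c :: 'a \<Rightarrow> nat. (\<forall>x\<in>X. c x < h) \<and>
     (\<forall>u\<in>X. \<forall>v\<in>X. ((u, v) \<in> E \<or> (v, u) \<in> E) \<longrightarrow> c u \<noteq> c v))"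

definition chi :: "('a \<times> 'a) set \<Rightarrow> 'a set \<Rightarrow> nat" where
  "chi E X = (LEAST h. colourable E X h)"

definition out_nbrs :: "('a \<times> 'a) set \<Rightarrow> 'a \<Rightarrow> 'a set \<Rightarrow> 'a set" where
  "out_nbrs E v S = {w \<in> S. (v, w) \<in> E}"

definition in_nbrs :: "('a \<times> 'a) set \<Rightarrow> 'a \<Rightarrow> 'a set \<Rightarrow> 'a set" where
  "in_nbrs E v S = {w \<in> S. (w, v) \<in> E}"

definition ordered_partition :: "'a set list \<Rightarrow> 'a set \<Rightarrow> bool" where
  "ordered_partition Xs V \<longleftrightarrow> (\<forall>i<length Xs. Xs ! i \<noteq> {}) \<and>
     (\<forall>i<length Xs. \<forall>j<length Xs. i \<noteq> j \<longrightarrow> Xs ! i \<inter> Xs ! j = {}) \<and>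
     \<Union> (set Xs) = V"

text \<open>"at most k-1 out-neighbours" is rendered as "fewer than k" (so for k = 0 it is
  unsatisfiable, as with the integer reading of k - 1 = -1).\<close>
definition out_orderable :: "nat \<Rightarrow> nat \<Rightarrow> 'a set \<Rightarrow> ('a \<times> 'a) set \<Rightarrow> bool" where
  "out_orderable h k V E \<longleftrightarrow> (\<exists>Xs. ordered_partition Xs V \<and>
     (\<forall>i<length Xs. chi E (Xs ! i) \<le> h \<and>
        (\<forall>v\<in>Xs ! i. card (out_nbrs E v (\<Union>j\<in>{i<..<length Xs}. Xs ! j)) < k)))"

definition in_orderable :: "nat \<Rightarrow> nat \<Rightarrow> 'a set \<Rightarrow> ('a \<times> 'a) set \<Rightarrow> bool" where
  "in_orderable h k V E \<longleftrightarrow> (\<exists>Xs. ordered_partition Xs V \<and>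
     (\<forall>i<length Xs. chi E (Xs ! i) \<le> h \<and>
        (\<forall>v\<in>Xs ! i. card (in_nbrs E v (\<Union>j\<in>{i<..<length Xs}. Xs ! j)) < k)))"

definition robust :: "nat \<Rightarrow> nat \<Rightarrow> 'a set \<Rightarrow> ('a \<times> 'a) set \<Rightarrow> bool" where
  "robust h k V E \<longleftrightarrow> (\<forall>Z. Z \<noteq> {} \<and> Z \<subseteq> V \<and> chi E Z \<le> h \<longrightarrow>
     (\<exists>v\<in>Z. card (out_nbrs E v (V - Z)) \<ge> k \<and> card (in_nbrs E v (V - Z)) \<ge> k))"

end

theory Submission
  imports Defs
begin

definition ord_out :: "('a \<times> 'a) set \<Rightarrow> nat \<Rightarrow> nat \<Rightarrow> 'a set list \<Rightarrow> bool" where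
  "ord_out E h k Xs \<longleftrightarrow> (\<forall>i<length Xs. chi E (Xs ! i) \<le> h \<and>
        (\<forall>v\<in>Xs ! i. card (out_nbrs E v (\<Union>j\<in>{i<..<length Xs}. Xs ! j)) < k))"

definition ord_in :: "('a \<times> 'a) set \<Rightarrow> nat \<Rightarrow> nat \<Rightarrow> 'a set list \<Rightarrow> bool" where
  "ord_in E h k Xs \<longleftrightarrow> (\<forall>i<length Xs. chi E (Xs ! i) \<le> h \<and>
        (\<forall>v\<in>Xs ! i. card (in_nbrs E v (\<Union>j\<in>{i<..<length Xs}. Xs ! j)) < k))"

lemma colourable_induced:
  assumes "X \<subseteq> W" shows "colourable (induced E W) X h = colourable E X h"
  unfolding colourable_def induced_def using assms by blast

lemma chi_induced:
  assumes "X \<subseteq> W" shows "chi (induced E W) X = chi E X"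
  unfolding chi_def using colourable_induced[OF assms, of E] by presburger

lemma colourable_finite: assumes "finite X" and nl: "\<forall>v. (v,v) \<notin> E" shows "colourable E X (card X)"
proof -
  obtain f where f: "bij_betw f X {0..<card X}" using ex_bij_betw_finite_nat[OF assms(1)] by blast
  have 1: "\<forall>x\<in>X. f x < card X" using f by (auto simp: bij_betw_def)
  have 2: "\<forall>u\<in>X. \<forall>v\<in>X. ((u, v) \<in> E \<or> (v, u) \<in> E) \<longrightarrow> f u \<noteq> f v"
  proof (intro ballI impI)
    fix u v assume "u \<in> X" "v \<in> X" "(u, v) \<in> E \<or> (v, u) \<in> E"
    then have "u \<noteq> v" using nl by blast
    then show "f u \<noteq> f v" using f \<open>u \<in> X\<close> \<open>v \<in> X\<close> by (auto simp: bij_betw_def inj_on_def)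
  qed
  show ?thesis unfolding colourable_def using 1 2 by blast
qed

lemma colourable_chi: assumes "finite X" "\<forall>v. (v,v) \<notin> E" shows "colourable E X (chi E X)"
  unfolding chi_def by (rule LeastI_ex) (use colourable_finite[OF assms(1,2)] in blast)

lemma colourable_mono: "colourable E X h \<Longrightarrow> Y \<subseteq> X \<Longrightarrow> h \<le> h' \<Longrightarrow> colourable E Y h'"
proof -
  assume a: "colourable E X h" and s: "Y \<subseteq> X" and l: "h \<le> h'"
  from a obtain c where c: "\<forall>x\<in>X. c x < h"
     "\<forall>u\<in>X. \<forall>v\<in>X. ((u, v) \<in> E \<or> (v, u) \<in> E) \<longrightarrow> c u \<noteq> c v"
    unfolding colourable_def by blast
  have "\<forall>x\<in>Y. c x < h'" using c(1) s l by fastforce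
  moreover have "\<forall>u\<in>Y. \<forall>v\<in>Y. ((u, v) \<in> E \<or> (v, u) \<in> E) \<longrightarrow> c u \<noteq> c v" using c(2) s by blast
  ultimately show ?thesis unfolding colourable_def by blast
qed

lemma chi_sub: assumes "finite X" "Y \<subseteq> X" "\<forall>v. (v,v) \<notin> E" shows "chi E Y \<le> chi E X"
proof -
  have "colourable E Y (chi E X)" using colourable_mono[OF colourable_chi[OF assms(1,3)] assms(2)] by simp
  thus ?thesis unfolding chi_def by (rule Least_le)
qed

lemma union_cons:
  "(\<Union>j\<in>{i<..<length (Z#Xs)}. (Z#Xs) ! j) =
     (if i = 0 then \<Union>(set Xs) else \<Union>j\<in>{i-1<..<length Xs}. Xs ! j)"
proof (cases i)
  case 0
  show ?thesis
  proof (rule set_eqI, rule iffI)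
    fix x assume "x \<in> (\<Union>j\<in>{i<..<length (Z#Xs)}. (Z#Xs) ! j)"
    then obtain j where "j \<in> {i<..<length (Z#Xs)}" "x \<in> (Z#Xs)!j" by blast
    then show "x \<in> (if i = 0 then \<Union>(set Xs) else \<Union>j\<in>{i-1<..<length Xs}. Xs ! j)"
      using 0 by (cases j) auto
  next
    fix x assume "x \<in> (if i = 0 then \<Union>(set Xs) else \<Union>j\<in>{i-1<..<length Xs}. Xs ! j)"
    then obtain j where "j < length Xs" "x \<in> Xs!j" using 0 by (auto simp: in_set_conv_nth)
    then show "x \<in> (\<Union>j\<in>{i<..<length (Z#Xs)}. (Z#Xs) ! j)" using 0
      by (intro UN_I[of "Suc j"]) auto
  qed
next
  case (Suc m)
  show ?thesis
  proof (rule set_eqI, rule iffI)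
    fix x assume "x \<in> (\<Union>j\<in>{i<..<length (Z#Xs)}. (Z#Xs) ! j)"
    then obtain j where "j \<in> {i<..<length (Z#Xs)}" "x \<in> (Z#Xs)!j" by blast
    then show "x \<in> (if i = 0 then \<Union>(set Xs) else \<Union>j\<in>{i-1<..<length Xs}. Xs ! j)"
      using Suc by (cases j) auto
  next
    fix x assume "x \<in> (if i = 0 then \<Union>(set Xs) else \<Union>j\<in>{i-1<..<length Xs}. Xs ! j)"
    then obtain j where "j \<in> {m<..<length Xs}" "x \<in> Xs!j" using Suc by auto
    then show "x \<in> (\<Union>j\<in>{i<..<length (Z#Xs)}. (Z#Xs) ! j)" using Suc
      by (intro UN_I[of "Suc j"]) auto
  qed
qed

lemma ord_out_cons:
  assumes "chi E Z \<le> h" "\<forall>v\<in>Z. card (out_nbrs E v (\<Union>(set Xs))) < k" "ord_out E h k Xs"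
  shows "ord_out E h k (Z#Xs)"
  unfolding ord_out_def
proof (intro allI impI)
  fix i assume i: "i < length (Z#Xs)"
  show "chi E ((Z # Xs) ! i) \<le> h \<and>
       (\<forall>v\<in>(Z # Xs) ! i. card (out_nbrs E v (\<Union>j\<in>{i<..<length (Z # Xs)}. (Z # Xs) ! j)) < k)"
  proof (cases i)
    case 0 thus ?thesis using assms union_cons[where i=i and Z=Z and Xs=Xs] by simp
  next
    case (Suc m)
    thus ?thesis using assms(3) i union_cons[where i=i and Z=Z and Xs=Xs] unfolding ord_out_def by auto
  qed
qed

lemma ord_in_cons:
  assumes "chi E Z \<le> h" "\<forall>v\<in>Z. card (in_nbrs E v (\<Union>(set Xs))) < k" "ord_in E h k Xs"
  shows "ord_in E h k (Z#Xs)"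
  unfolding ord_in_def
proof (intro allI impI)
  fix i assume i: "i < length (Z#Xs)"
  show "chi E ((Z # Xs) ! i) \<le> h \<and>
       (\<forall>v\<in>(Z # Xs) ! i. card (in_nbrs E v (\<Union>j\<in>{i<..<length (Z # Xs)}. (Z # Xs) ! j)) < k)"
  proof (cases i)
    case 0 thus ?thesis using assms union_cons[where i=i and Z=Z and Xs=Xs] by simp
  next
    case (Suc m)
    thus ?thesis using assms(3) i union_cons[where i=i and Z=Z and Xs=Xs] unfolding ord_in_def by auto
  qed
qed

lemma op_cons:
  assumes "ordered_partition Xs P" "Z \<noteq> {}" "Z \<inter> P = {}"
  shows "ordered_partition (Z#Xs) (Z \<union> P)"
proof -
  have ne: "\<forall>i<length Xs. Xs ! i \<noteq> {}" and dj: "\<forall>i<length Xs. \<forall>j<length Xs. i \<noteq> j \<longrightarrow> Xs ! i \<inter> Xs ! j = {}"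
    and un: "\<Union> (set Xs) = P" using assms(1) unfolding ordered_partition_def by auto
  have "\<forall>i<length (Z#Xs). (Z#Xs) ! i \<noteq> {}"
  proof (intro allI impI)
    fix i assume "i < length (Z#Xs)" thus "(Z#Xs) ! i \<noteq> {}" using ne assms(2) by (cases i) auto
  qed
  moreover have "\<forall>i<length (Z#Xs). \<forall>j<length (Z#Xs). i \<noteq> j \<longrightarrow> (Z#Xs) ! i \<inter> (Z#Xs) ! j = {}"
  proof (intro allI impI)
    fix i j assume "i < length (Z#Xs)" "j < length (Z#Xs)" "i \<noteq> j"
    moreover have "\<And>m. m < length Xs \<Longrightarrow> Xs ! m \<subseteq> P" using un nth_mem by blast
    ultimately show "(Z#Xs) ! i \<inter> (Z#Xs) ! j = {}" using dj assms(3)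
      by (cases i; cases j) (auto, blast+)
  qed
  moreover have "\<Union> (set (Z#Xs)) = Z \<union> P" using un by simp
  ultimately show ?thesis unfolding ordered_partition_def by blast
qed

lemma main:
  assumes "finite W" and nl: "\<forall>v. (v,v) \<notin> E"
  shows "\<exists>Ps Qs P Q R. ordered_partition Ps P \<and> ordered_partition Qs Q \<and> P \<union> Q \<union> R = W \<and>
     P \<inter> Q = {} \<and> P \<inter> R = {} \<and> Q \<inter> R = {} \<and> ord_out E h k Ps \<and> ord_in E h k Qs \<and>
     robust h k R (induced E R)"
  using assms(1)
proof (induction W rule: finite_psubset_induct)
  case (psubset W)
  show ?case
  proof (cases "robust h k W (induced E W)")
    case True
    have "ordered_partition [] {}" unfolding ordered_partition_def by simp
    moreover have "ord_out E h k []" "ord_in E h k []" unfolding ord_out_def ord_in_def by simp_all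
    ultimately show ?thesis using True by blast
  next
    case False
    then obtain Z where Z: "Z \<noteq> {}" "Z \<subseteq> W" "chi (induced E W) Z \<le> h"
      and bad: "\<forall>v\<in>Z. card (out_nbrs (induced E W) v (W - Z)) < k \<or> card (in_nbrs (induced E W) v (W - Z)) < k"
      unfolding robust_def by (meson not_le)
    have chiZ: "chi E Z \<le> h" using Z chi_induced by metis
    have finZ: "finite Z" using Z(2) psubset(1) finite_subset by blast
    have oE: "\<And>v. v \<in> W \<Longrightarrow> out_nbrs (induced E W) v (W - Z) = out_nbrs E v (W - Z)"
      unfolding out_nbrs_def induced_def by auto
    have iE: "\<And>v. v \<in> W \<Longrightarrow> in_nbrs (induced E W) v (W - Z) = in_nbrs E v (W - Z)"
      unfolding in_nbrs_def induced_def by auto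
    define Z1 where "Z1 = {v\<in>Z. card (out_nbrs E v (W - Z)) < k}"
    define Z2 where "Z2 = Z - Z1"
    have Z1o: "\<forall>v\<in>Z1. card (out_nbrs E v (W - Z)) < k" unfolding Z1_def by blast
    have Z2i: "\<forall>v\<in>Z2. card (in_nbrs E v (W - Z)) < k" unfolding Z2_def Z1_def
    proof
      fix v assume v: "v \<in> Z - {v \<in> Z. card (out_nbrs E v (W - Z)) < k}"
      hence "v \<in> W" using Z(2) by blast
      thus "card (in_nbrs E v (W - Z)) < k" using bad v oE[OF \<open>v \<in> W\<close>] iE[OF \<open>v \<in> W\<close>] by auto
    qed
    have c1: "chi E Z1 \<le> h" using chi_sub[OF finZ _ nl, of Z1] chiZ unfolding Z1_def by auto
    have c2: "chi E Z2 \<le> h" using chi_sub[OF finZ _ nl, of Z2] chiZ unfolding Z2_def by auto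
    have "W - Z \<subset> W" using Z by blast
    from psubset(2)[OF this] obtain Ps Qs P Q R where IH: "ordered_partition Ps P" "ordered_partition Qs Q"
      "P \<union> Q \<union> R = W - Z" "P \<inter> Q = {}" "P \<inter> R = {}" "Q \<inter> R = {}" "ord_out E h k Ps" "ord_in E h k Qs"
      "robust h k R (induced E R)" by blast
    have UP: "\<Union>(set Ps) = P" and UQ: "\<Union>(set Qs) = Q" using IH(1,2) unfolding ordered_partition_def by auto
    have finW: "finite (W - Z)" using psubset(1) by blast
    have A1: "\<forall>v\<in>Z1. card (out_nbrs E v (\<Union>(set Ps))) < k"
    proof
      fix v assume "v \<in> Z1"
      have "out_nbrs E v (\<Union>(set Ps)) \<subseteq> out_nbrs E v (W - Z)" using UP IH(3) unfolding out_nbrs_def by blast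
      moreover have "finite (out_nbrs E v (W - Z))" using finW unfolding out_nbrs_def by (rule finite_subset[rotated]) blast
      ultimately show "card (out_nbrs E v (\<Union>(set Ps))) < k" using Z1o \<open>v \<in> Z1\<close> card_mono le_less_trans by metis
    qed
    have A2: "\<forall>v\<in>Z2. card (in_nbrs E v (\<Union>(set Qs))) < k"
    proof
      fix v assume "v \<in> Z2"
      have "in_nbrs E v (\<Union>(set Qs)) \<subseteq> in_nbrs E v (W - Z)" using UQ IH(3) unfolding in_nbrs_def by blast
      moreover have "finite (in_nbrs E v (W - Z))" using finW unfolding in_nbrs_def by (rule finite_subset[rotated]) blast
      ultimately show "card (in_nbrs E v (\<Union>(set Qs))) < k" using Z2i \<open>v \<in> Z2\<close> card_mono le_less_trans by metis
    qed
    define Ps' where "Ps' = (if Z1 = {} then Ps else Z1 # Ps)"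
    define Qs' where "Qs' = (if Z2 = {} then Qs else Z2 # Qs)"
    have d1: "Z1 \<inter> P = {}" "Z2 \<inter> Q = {}" using IH(3) unfolding Z1_def Z2_def by auto
    have "ordered_partition Ps' (Z1 \<union> P)" unfolding Ps'_def using op_cons[OF IH(1) _ d1(1)] IH(1) by auto
    moreover have "ordered_partition Qs' (Z2 \<union> Q)" unfolding Qs'_def using op_cons[OF IH(2) _ d1(2)] IH(2) by auto
    moreover have "ord_out E h k Ps'" unfolding Ps'_def using ord_out_cons[OF c1 _ IH(7)] IH(7) A1 by auto
    moreover have "ord_in E h k Qs'" unfolding Qs'_def using ord_in_cons[OF c2 _ IH(8)] IH(8) A2 by auto
    moreover have "(Z1 \<union> P) \<union> (Z2 \<union> Q) \<union> R = W" using IH(3) Z(2) unfolding Z2_def Z1_def by blast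
    moreover have "(Z1 \<union> P) \<inter> (Z2 \<union> Q) = {}" "(Z1 \<union> P) \<inter> R = {}" "(Z2 \<union> Q) \<inter> R = {}"
      using IH(3-6) unfolding Z2_def Z1_def by blast+
    ultimately show ?thesis using IH(9) by blast
  qed
qed

lemma out_conv:
  assumes "ordered_partition Ps P" "ord_out E h k Ps"
  shows "out_orderable h k P (induced E P)"
  unfolding out_orderable_def
proof (intro exI conjI allI impI ballI)
  show "ordered_partition Ps P" by (rule assms(1))
  have U: "\<Union>(set Ps) = P" using assms(1) unfolding ordered_partition_def by auto
  fix i assume i: "i < length Ps"
  have sub: "Ps ! i \<subseteq> P" using U i nth_mem by blast
  show "chi (induced E P) (Ps ! i) \<le> h" using chi_induced[OF sub] assms(2) i unfolding ord_out_def by simp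
  fix v assume v: "v \<in> Ps ! i"
  have "(\<Union>j\<in>{i<..<length Ps}. Ps ! j) \<subseteq> P" using U nth_mem by fastforce
  hence "out_nbrs (induced E P) v (\<Union>j\<in>{i<..<length Ps}. Ps ! j) = out_nbrs E v (\<Union>j\<in>{i<..<length Ps}. Ps ! j)"
    using sub v unfolding out_nbrs_def induced_def by blast
  thus "card (out_nbrs (induced E P) v (\<Union>j\<in>{i<..<length Ps}. Ps ! j)) < k"
    using assms(2) i v unfolding ord_out_def by simp
qed

lemma in_conv:
  assumes "ordered_partition Ps P" "ord_in E h k Ps"
  shows "in_orderable h k P (induced E P)"
  unfolding in_orderable_def
proof (intro exI conjI allI impI ballI)
  show "ordered_partition Ps P" by (rule assms(1))
  have U: "\<Union>(set Ps) = P" using assms(1) unfolding ordered_partition_def by auto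
  fix i assume i: "i < length Ps"
  have sub: "Ps ! i \<subseteq> P" using U i nth_mem by blast
  show "chi (induced E P) (Ps ! i) \<le> h" using chi_induced[OF sub] assms(2) i unfolding ord_in_def by simp
  fix v assume v: "v \<in> Ps ! i"
  have "(\<Union>j\<in>{i<..<length Ps}. Ps ! j) \<subseteq> P" using U nth_mem by fastforce
  hence "in_nbrs (induced E P) v (\<Union>j\<in>{i<..<length Ps}. Ps ! j) = in_nbrs E v (\<Union>j\<in>{i<..<length Ps}. Ps ! j)"
    using sub v unfolding in_nbrs_def induced_def by blast
  thus "card (in_nbrs (induced E P) v (\<Union>j\<in>{i<..<length Ps}. Ps ! j)) < k"
    using assms(2) i v unfolding ord_in_def by simp
qed

theorem theorem3p5:
  fixes h k :: nat and V :: "'a set" and E :: "('a \<times> 'a) set"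
  assumes "digraph V E"
  shows "\<exists>P Q R. P \<union> Q \<union> R = V \<and> P \<inter> Q = {} \<and> P \<inter> R = {} \<and> Q \<inter> R = {} \<and>
           out_orderable h k P (induced E P) \<and>
           in_orderable h k Q (induced E Q) \<and>
           robust h k R (induced E R)"
proof -
  have "finite V" "\<forall>v. (v,v) \<notin> E" using assms unfolding digraph_def by auto
  from main[OF this, of h k] obtain Ps Qs P Q R where
    "ordered_partition Ps P" "ordered_partition Qs Q" "P \<union> Q \<union> R = V"
     "P \<inter> Q = {}" "P \<inter> R = {}" "Q \<inter> R = {}" "ord_out E h k Ps" "ord_in E h k Qs"
     "robust h k R (induced E R)" by blast
  note X = this
  have "out_orderable h k P (induced E P)" by (rule out_conv[OF X(1) X(7)])
  moreover have "in_orderable h k Q (induced E Q)" by (rule in_conv[OF X(2) X(8)])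
  ultimately show ?thesis using X(3-6,9) by blast
qed

end
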